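(* Let $\mathcal{X}$ be a probability distribution over a set of queries, $k \geq 1$, and $\hat q_1,\dots,\hat q_k,\hat c_1,\dots,\hat c_k : \mathcal{X} \to \mathbb{R}$ integrable functions. Let $0 \leq \lambda_1 < \lambda_2$ and let $s^{(1)} \in S_{\lambda_1}$, $s^{(2)} \in S_{\lambda_2}$ be arbitrary. Then $$\mathbb{E}_{x \sim \mathcal{X}}\left[\sum_{i=1}^k s^{(1)}_i(x)\hat c_i(x)\right] \geqslant \mathbb{E}_{x \sim \mathcal{X}}\left[\sum_{i=1}^k s^{(2)}_i(x)\hat c_i(x)\right].$$
   Context: A routing strategy is a measurable function $s : \mathcal{X} \to \mathbb{R}^k$ with $s_i(x) \geq 0$ for all $i$ and $\sum_{i=1}^k s_i(x) = 1$ for all $x$. For $\lambda \in \mathbb{R}^+$, $S_\lambda$ is the set of routing strategies $s$ such that for all $x \in \mathcal{X}$ and $i \in \{1,\dots,k\}$: if $\hat q_i(x) - \lambda \hat c_i(x) < \max_j(\hat q_j(x) - \lambda \hat c_j(x))$ then $s_i(x) = 0$. *)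

theory Defs
  imports "HOL-Probability.Probability"
begin

definition routing_strategy :: "'a measure \<Rightarrow> nat \<Rightarrow> ('a \<Rightarrow> nat \<Rightarrow> real) \<Rightarrow> bool" where
  "routing_strategy M k s \<longleftrightarrow>
     (\<forall>i\<in>{1..k}. (\<lambda>x. s x i) \<in> borel_measurable M) \<and>
     (\<forall>x\<in>space M. (\<forall>i\<in>{1..k}. s x i \<ge> 0) \<and> (\<Sum>i=1..k. s x i) = 1)"

definition S_lambda :: "'a measure \<Rightarrow> nat \<Rightarrow> (nat \<Rightarrow> 'a \<Rightarrow> real) \<Rightarrow> (nat \<Rightarrow> 'a \<Rightarrow> real)
    \<Rightarrow> real \<Rightarrow> ('a \<Rightarrow> nat \<Rightarrow> real) set" where
  "S_lambda M k q c lam = {s. routing_strategy M k s \<and>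
     (\<forall>x\<in>space M. \<forall>i\<in>{1..k}.
        q i x - lam * c i x < Max ((\<lambda>j. q j x - lam * c j x) ` {1..k}) \<longrightarrow> s x i = 0)}"

end

theory Submission
  imports Defs
begin

lemma integ_sc:
  assumes rs: "routing_strategy M k s"
    and ic: "\<And>i. i \<in> {1..k} \<Longrightarrow> integrable M (c i)"
  shows "integrable M (\<lambda>x. \<Sum>i=1..k. s x i * c i x)"
proof (rule Bochner_Integration.integrable_sum[where I="{1..k}" and f="\<lambda>i x. s x i * c i x" and M=M])
  fix i assume i: "i \<in> {1..k}"
  have le1: "s x i \<le> 1" if "x \<in> space M" for x
  proof -
    have nn: "\<forall>j\<in>{1..k}. s x j \<ge> 0" and sm: "(\<Sum>j=1..k. s x j) = 1"
      using rs that unfolding routing_strategy_def by auto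
    have "s x i \<le> (\<Sum>j=1..k. s x j)"
      using member_le_sum[of i "{1..k}" "\<lambda>j. s x j"] nn i by auto
    thus ?thesis using sm by simp
  qed
  show "integrable M (\<lambda>x. s x i * c i x)"
  proof (rule Bochner_Integration.integrable_bound[OF ic[OF i]])
    show "(\<lambda>x. s x i * c i x) \<in> borel_measurable M"
    proof (rule borel_measurable_times)
      show "(\<lambda>x. s x i) \<in> borel_measurable M" using rs i unfolding routing_strategy_def by auto
      show "c i \<in> borel_measurable M" using ic[OF i] by auto
    qed
    show "AE x in M. norm (s x i * c i x) \<le> norm (c i x)"
    proof (rule AE_I2)
      fix x assume x: "x \<in> space M"
      have "0 \<le> s x i" using rs x i unfolding routing_strategy_def by auto
      thus "norm (s x i * c i x) \<le> norm (c i x)"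
        using le1[OF x] by (simp add: abs_mult mult_left_le_one_le)
    qed
  qed
qed

theorem lemma3:
  fixes M :: "'a measure" and k :: nat
    and q c :: "nat \<Rightarrow> 'a \<Rightarrow> real"
    and lam1 lam2 :: real
    and s1 s2 :: "'a \<Rightarrow> nat \<Rightarrow> real"
  assumes "prob_space M"
    and "k \<ge> 1"
    and "\<And>i. i \<in> {1..k} \<Longrightarrow> integrable M (q i)"
    and "\<And>i. i \<in> {1..k} \<Longrightarrow> integrable M (c i)"
    and "0 \<le> lam1" and "lam1 < lam2"
    and "s1 \<in> S_lambda M k q c lam1"
    and "s2 \<in> S_lambda M k q c lam2"
  shows "(\<integral>x. (\<Sum>i=1..k. s1 x i * c i x) \<partial>M) \<ge> (\<integral>x. (\<Sum>i=1..k. s2 x i * c i x) \<partial>M)"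
proof (rule integral_mono)
  have r1: "routing_strategy M k s1" and r2: "routing_strategy M k s2"
    using assms(7,8) unfolding S_lambda_def by auto
  show "integrable M (\<lambda>x. \<Sum>i=1..k. s1 x i * c i x)" by (rule integ_sc[OF r1 assms(4)])
  show "integrable M (\<lambda>x. \<Sum>i=1..k. s2 x i * c i x)" by (rule integ_sc[OF r2 assms(4)])
  fix x assume x: "x \<in> space M"
  define v where "v = (\<lambda>l j. q j x - l * c j x)"
  have z1: "\<And>i. i \<in> {1..k} \<Longrightarrow> v lam1 i < Max ((v lam1) ` {1..k}) \<Longrightarrow> s1 x i = 0"
    using assms(7) x unfolding S_lambda_def v_def by auto
  have z2: "\<And>i. i \<in> {1..k} \<Longrightarrow> v lam2 i < Max ((v lam2) ` {1..k}) \<Longrightarrow> s2 x i = 0"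
    using assms(8) x unfolding S_lambda_def v_def by auto
  have mx: "\<And>l j. j \<in> {1..k} \<Longrightarrow> v l j \<le> Max ((v l) ` {1..k})"
    by (rule Max_ge) auto
  have nn1: "\<And>i. i \<in> {1..k} \<Longrightarrow> s1 x i \<ge> 0" and sm1: "(\<Sum>j=1..k. s1 x j) = 1"
    using r1 x unfolding routing_strategy_def by auto
  have nn2: "\<And>i. i \<in> {1..k} \<Longrightarrow> s2 x i \<ge> 0" and sm2: "(\<Sum>j=1..k. s2 x j) = 1"
    using r2 x unfolding routing_strategy_def by auto
  have key: "s1 x i * s2 x j * (c i x - c j x) \<ge> 0" if i: "i \<in> {1..k}" and j: "j \<in> {1..k}" for i j
  proof (cases "s1 x i = 0 \<or> s2 x j = 0")
    case True thus ?thesis by auto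
  next
    case False
    hence a: "v lam1 i \<ge> v lam1 j" and b: "v lam2 j \<ge> v lam2 i"
      using z1[OF i] z2[OF j] mx[OF i, of lam2] mx[OF j, of lam1] by force+
    have "(lam2 - lam1) * (c i x - c j x) \<ge> 0"
      using a b unfolding v_def by (simp add: algebra_simps)
    hence "c i x - c j x \<ge> 0" using assms(6)
      by (simp add: zero_le_mult_iff)
    thus ?thesis using nn1[OF i] nn2[OF j] by simp
  qed
  have "(\<Sum>i=1..k. s1 x i * c i x) - (\<Sum>j=1..k. s2 x j * c j x)
      = (\<Sum>i=1..k. \<Sum>j=1..k. s1 x i * s2 x j * (c i x - c j x))"
  proof -
    have A: "(\<Sum>i=1..k. s1 x i * c i x) = (\<Sum>i=1..k. \<Sum>j=1..k. s1 x i * s2 x j * c i x)"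
    proof (rule sum.cong[OF refl])
      fix i show "s1 x i * c i x = (\<Sum>j=1..k. s1 x i * s2 x j * c i x)"
        using sm2 by (simp add: sum_distrib_left[symmetric] sum_distrib_right[symmetric])
    qed
    have B: "(\<Sum>j=1..k. s2 x j * c j x) = (\<Sum>i=1..k. \<Sum>j=1..k. s1 x i * s2 x j * c j x)"
      apply (subst sum.swap)
      apply (rule sum.cong[OF refl])
      using sm1 by (simp add: sum_distrib_left[symmetric] sum_distrib_right[symmetric])
    show ?thesis unfolding A B by (simp add: sum_subtractf right_diff_distrib)
  qed
  moreover have "(\<Sum>i=1..k. \<Sum>j=1..k. s1 x i * s2 x j * (c i x - c j x)) \<ge> 0"
    by (intro sum_nonneg key) auto
  ultimately show "(\<Sum>i=1..k. s2 x i * c i x) \<le> (\<Sum>i=1..k. s1 x i * c i x)" by simp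
qed

end
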